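(* For every finite set $S\subset\mathbb{R}^2$ in general position, the exit graph of $S$ is supporting for $S$.
   Context: General position: no three points collinear. Two labeled point sets in general position have the same order type under a bijection $\varphi$ if every triple $(p,q,r)$ of distinct points has the same orientation (clockwise or counterclockwise) as $(\varphi(p),\varphi(q),\varphi(r))$. A geometric graph on $S$ is a graph with vertex set $S$ whose edges are drawn as straight segments between their endpoints. An ambient isotopy of $\mathbb{R}^2$ is a continuous map $f:\mathbb{R}^2\times[0,1]\to\mathbb{R}^2$ with $f(\cdot,t)$ a homeomorphism for every $t$ and $f(\cdot,0)$ the identity. A geometric graph $G$ on $S$ is supporting for $S$ if every ambient isotopy $f$ such that for every $t\in[0,1]$ the image under $f(\cdot,t)$ of each edge of $G$ is a straight segment and no four points of $f(S,t)$ are collinear, preserves the order type, i.e. for each $t$ with $f(S,t)$ in general position, $f(S,t)$ has the same order type as $S$ under $s\mapsto f(s,t)$. For distinct $a,b,c\in S$, $ab$ is an exit edge with witness $c$ if there is no $p\in S$ such that the line through $a$ and $p$ strictly separates $b$ from $c$, and no $p\in S$ such that the line through $b$ and $p$ strictly separates $a$ from $c$; $ab$ is an exit edge if it has some witness. The exit graph of $S$ is the geometric graph on $S$ whose edges are the exit edges. *)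

theory Defs
  imports "HOL-Analysis.Analysis"
begin

type_synonym pt = "real \<times> real"

definition orient :: "pt \<Rightarrow> pt \<Rightarrow> pt \<Rightarrow> real" where
  "orient p q r = sgn ((fst q - fst p) * (snd r - snd p) - (snd q - snd p) * (fst r - fst p))"

definition general_position :: "pt set \<Rightarrow> bool" where
  "general_position S \<longleftrightarrow>
     (\<forall>p\<in>S. \<forall>q\<in>S. \<forall>r\<in>S. p \<noteq> q \<and> p \<noteq> r \<and> q \<noteq> r \<longrightarrow> \<not> collinear {p, q, r})"

definition same_order_type :: "pt set \<Rightarrow> (pt \<Rightarrow> pt) \<Rightarrow> bool" where
  "same_order_type S \<phi> \<longleftrightarrow>
     (\<forall>p\<in>S. \<forall>q\<in>S. \<forall>r\<in>S. p \<noteq> q \<and> p \<noteq> r \<and> q \<noteq> r \<longrightarrow>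
        orient (\<phi> p) (\<phi> q) (\<phi> r) = orient p q r)"

definition geometric_graph :: "pt set \<Rightarrow> pt set set \<Rightarrow> bool" where
  "geometric_graph S E \<longleftrightarrow> (\<forall>e\<in>E. e \<subseteq> S \<and> card e = 2)"

definition ambient_isotopy :: "(pt \<times> real \<Rightarrow> pt) \<Rightarrow> bool" where
  "ambient_isotopy f \<longleftrightarrow>
     continuous_on (UNIV \<times> {0..1}) f \<and>
     (\<forall>t\<in>{0..1}. \<exists>g. homeomorphism UNIV UNIV (\<lambda>x. f (x, t)) g) \<and>
     (\<forall>x. f (x, 0) = x)"

definition supporting :: "pt set \<Rightarrow> pt set set \<Rightarrow> bool" where
  "supporting S E \<longleftrightarrow>
     (\<forall>f. ambient_isotopy f \<and>
          (\<forall>t\<in>{0..1}.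
             (\<forall>a b. {a, b} \<in> E \<longrightarrow>
                (\<exists>c d. (\<lambda>x. f (x, t)) ` closed_segment a b = closed_segment c d)) \<and>
             (\<forall>A. A \<subseteq> (\<lambda>x. f (x, t)) ` S \<and> card A = 4 \<longrightarrow> \<not> collinear A))
        \<longrightarrow> (\<forall>t\<in>{0..1}. general_position ((\<lambda>x. f (x, t)) ` S) \<longrightarrow>
                 same_order_type S (\<lambda>x. f (x, t))))"

definition strictly_separates :: "pt \<Rightarrow> pt \<Rightarrow> pt \<Rightarrow> pt \<Rightarrow> bool" where
  "strictly_separates a p b c \<longleftrightarrow> a \<noteq> p \<and> orient a p b * orient a p c < 0"

definition exit_edge_with_witness :: "pt set \<Rightarrow> pt \<Rightarrow> pt \<Rightarrow> pt \<Rightarrow> bool" where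
  "exit_edge_with_witness S a b c \<longleftrightarrow>
     a \<in> S \<and> b \<in> S \<and> c \<in> S \<and> a \<noteq> b \<and> a \<noteq> c \<and> b \<noteq> c \<and>
     \<not> (\<exists>p\<in>S. strictly_separates a p b c) \<and>
     \<not> (\<exists>p\<in>S. strictly_separates b p a c)"

definition exit_edge :: "pt set \<Rightarrow> pt \<Rightarrow> pt \<Rightarrow> bool" where
  "exit_edge S a b \<longleftrightarrow> (\<exists>c. exit_edge_with_witness S a b c)"

definition exit_graph :: "pt set \<Rightarrow> pt set set" where
  "exit_graph S = {{a, b} | a b. exit_edge S a b}"

end

theory Submission
  imports Defs
begin


definition dt :: "pt \<Rightarrow> pt \<Rightarrow> pt \<Rightarrow> real" where
  "dt p q r = (fst q - fst p) * (snd r - snd p) - (snd q - snd p) * (fst r - fst p)"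

lemma orient_dt: "orient p q r = sgn (dt p q r)"
  by (simp add: orient_def dt_def)

lemma collinear_param:
  assumes "\<forall>x\<in>X. \<exists>k. x = a + k *\<^sub>R (u::pt)"
  shows "collinear X"
  unfolding collinear_def
proof (rule exI[of _ u], intro ballI)
  fix x y assume "x \<in> X" "y \<in> X"
  then obtain kx ky where "x = a + kx *\<^sub>R u" "y = a + ky *\<^sub>R u" using assms by blast
  then show "\<exists>c. x - y = c *\<^sub>R u" by (intro exI[of _ "kx - ky"]) (simp add: algebra_simps)
qed

lemma dt_zero_param:
  assumes "dt p q r = 0" "p \<noteq> q"
  shows "\<exists>k. r = p + k *\<^sub>R (q - p)"
proof (cases "fst q = fst p")
  case False
  define k where "k = (fst r - fst p) / (fst q - fst p)"
  have h: "fst q - fst p \<noteq> 0" using False by simp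
  have "snd r - snd p = k * (snd q - snd p)"
    using assms(1) h unfolding k_def dt_def by (simp add: field_simps)
  moreover have "fst r - fst p = k * (fst q - fst p)" using h unfolding k_def by simp
  ultimately show ?thesis by (intro exI[of _ k]) (simp add: prod_eq_iff algebra_simps)
next
  case True
  then have h: "snd q - snd p \<noteq> 0" using assms(2) by (simp add: prod_eq_iff)
  define k where "k = (snd r - snd p) / (snd q - snd p)"
  have "fst r - fst p = 0"
    using assms(1) True h unfolding dt_def by simp
  then have "fst r - fst p = k * (fst q - fst p)"
    using True by simp
  moreover have "snd r - snd p = k * (snd q - snd p)" using h unfolding k_def by simp
  ultimately show ?thesis by (intro exI[of _ k]) (simp add: prod_eq_iff algebra_simps)
qed

lemma dt_zero_collinear:
  assumes "dt p q r = 0" shows "collinear {p, q, r}"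
proof (cases "p = q")
  case True then show ?thesis by (simp add: collinear_2 insert_commute)
next
  case False
  then obtain k where k: "r = p + k *\<^sub>R (q - p)" using dt_zero_param assms by blast
  show ?thesis
    apply (rule collinear_param[where a=p and u="q - p"])
    using k by (auto intro: exI[of _ 0] exI[of _ 1])
qed

lemma middle:
  assumes "dt A B C = 0" "A \<noteq> B" "A \<noteq> C" "B \<noteq> C"
  shows "(\<exists>w. 0 < w \<and> w < 1 \<and> C = A + w *\<^sub>R (B - A)) \<or>
         (\<exists>w. 0 < w \<and> w < 1 \<and> B = A + w *\<^sub>R (C - A)) \<or>
         (\<exists>w. 0 < w \<and> w < 1 \<and> A = C + w *\<^sub>R (B - C))"
proof -
  obtain k where k: "C = A + k *\<^sub>R (B - A)" using dt_zero_param assms by blast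
  have k0: "k \<noteq> 0" using k assms by auto
  have k1: "k \<noteq> 1" using k assms by auto
  consider "0 < k \<and> k < 1" | "k > 1" | "k < 0" using k0 k1 by linarith
  then show ?thesis
  proof cases
    case 1 then show ?thesis using k by blast
  next
    case 2
    have "(1/k) *\<^sub>R (C - A) = B - A" using k k0 by simp
    then have "B = A + (1/k) *\<^sub>R (C - A)" by (simp add: algebra_simps)
    then show ?thesis using 2 by (intro disjI2 disjI1 exI[of _ "1/k"]) auto
  next
    case 3
    have e1: "B - C = (1-k) *\<^sub>R (B - A)" using k by (simp add: algebra_simps)
    have eq: "(-k/(1-k)) *\<^sub>R (B - C) = (-k) *\<^sub>R (B - A)" using e1 3 by simp
    have a1: "A = C + (-k) *\<^sub>R (B - A)" using k by (simp add: algebra_simps)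
    have "A = C + (-k/(1-k)) *\<^sub>R (B - C)" using a1 eq by metis
    moreover have "0 < -k/(1-k)" "-k/(1-k) < 1" using 3 by (auto simp: field_simps)
    ultimately show ?thesis by blast
  qed
qed

lemma no_sign_change:
  fixes g :: "real \<Rightarrow> real"
  assumes "continuous_on {a..b} g" "a \<le> b" "g a * g b < 0"
  shows "\<exists>s\<in>{a..b}. g s = 0"
proof (cases "g a < 0")
  case True
  then have "g b > 0" using assms(3) by (simp add: mult_less_0_iff)
  then show ?thesis using IVT'[of g a 0 b] True assms by auto
next
  case False
  then have "g a > 0" "g b < 0" using assms(3) by (auto simp add: mult_less_0_iff)
  then show ?thesis using IVT2'[of g b 0 a] assms by auto
qed

lemma side:
  fixes F :: "pt \<Rightarrow> pt"
  assumes inj: "inj_on F S" and S: "a\<in>S" "b\<in>S" "c\<in>S" "a\<noteq>b" "a\<noteq>c" "b\<noteq>c"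
   and B: "F b = F a + v *\<^sub>R (F c - F a)" "v > 0"
   and sg: "\<forall>p\<in>S. \<forall>q\<in>S. \<forall>r\<in>S. p\<noteq>q \<and> p\<noteq>r \<and> q\<noteq>r \<and> dt (F p) (F q) (F r) \<noteq> 0
              \<longrightarrow> sgn (dt (F p) (F q) (F r)) = orient p q r"
   and no4: "\<forall>A. A \<subseteq> F ` S \<and> card A = 4 \<longrightarrow> \<not> collinear A"
  shows "\<not>(\<exists>p\<in>S. strictly_separates a p c b)"
proof
  assume "\<exists>p\<in>S. strictly_separates a p c b"
  then obtain p where p: "p \<in> S" and ap: "a \<noteq> p" and neg: "orient a p c * orient a p b < 0"
    unfolding strictly_separates_def by blast
  have pc: "p \<noteq> c" using neg by (auto simp: orient_def)
  have pb: "p \<noteq> b" using neg by (auto simp: orient_def)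
  have dAPB: "dt (F a) (F p) (F b) = v * dt (F a) (F p) (F c)"
    by (simp add: B dt_def algebra_simps)
  have FaFp: "F a \<noteq> F p" using inj ap p S by (auto dest: inj_onD)
  have nz: "dt (F a) (F p) (F c) \<noteq> 0"
  proof
    assume "dt (F a) (F p) (F c) = 0"
    then obtain k where k: "F c = F a + k *\<^sub>R (F p - F a)" using dt_zero_param FaFp by blast
    have kb: "F b = F a + (v * k) *\<^sub>R (F p - F a)" using B(1) k by (simp add: algebra_simps)
    have col: "collinear {F a, F p, F b, F c}"
      apply (rule collinear_param[where a="F a" and u="F p - F a"])
      using k kb by (auto intro: exI[of _ 0] exI[of _ 1])
    have "card {F a, F p, F b, F c} = 4"
      using inj S p ap pc pb by (auto simp: inj_on_eq_iff)
    moreover have "{F a, F p, F b, F c} \<subseteq> F ` S" using S p by auto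
    ultimately show False using no4 col by blast
  qed
  have o1: "orient a p c = sgn (dt (F a) (F p) (F c))" using sg S p ap pc nz by metis
  have nz2: "dt (F a) (F p) (F b) \<noteq> 0" using dAPB nz B(2) by simp
  have o2: "orient a p b = sgn (dt (F a) (F p) (F b))" using sg S p ap pb nz2 by metis
  have "orient a p b = orient a p c" using o1 o2 dAPB B(2) by (simp add: sgn_mult)
  then show False using neg by (simp add: orient_def sgn_if split: if_splits)
qed

lemma contra:
  fixes F :: "pt \<Rightarrow> pt"
  assumes gp: "general_position S" and S: "x\<in>S" "y\<in>S" "z\<in>S" "x\<noteq>y" "x\<noteq>z" "y\<noteq>z"
    and inj: "inj F" and w: "F y = F x + w *\<^sub>R (F z - F x)" "0 < w" "w < 1"
    and seg: "\<exists>c d. F ` closed_segment x z = closed_segment c d"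
  shows False
proof -
  have "F y = (1 - w) *\<^sub>R F x + w *\<^sub>R F z" using w(1) by (simp add: algebra_simps)
  then have "F y \<in> closed_segment (F x) (F z)" using w unfolding closed_segment_def by auto
  moreover obtain c d where cd: "F ` closed_segment x z = closed_segment c d" using seg by blast
  moreover have "closed_segment (F x) (F z) \<subseteq> closed_segment c d"
  proof (rule closed_segment_subset)
    show "F x \<in> closed_segment c d" "F z \<in> closed_segment c d"
      using cd[symmetric] by auto
  qed (rule convex_closed_segment)
  ultimately have "F y \<in> F ` closed_segment x z" using cd by auto
  then obtain s where s: "s \<in> closed_segment x z" "F y = F s" by auto
  then have "y = s" using inj by (auto dest: injD)
  then obtain u where u: "y = (1 - u) *\<^sub>R x + u *\<^sub>R z" using s unfolding closed_segment_def by auto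
  have "collinear {x, y, z}"
    apply (rule collinear_param[where a=x and u="z - x"])
    using u by (auto simp: algebra_simps intro: exI[of _ 0] exI[of _ 1] exI[of _ u])
  then show False using gp S unfolding general_position_def by blast
qed



lemma homeo_inj: "homeomorphism UNIV UNIV h g \<Longrightarrow> inj h"
  unfolding homeomorphism_def by (metis UNIV_I injI)

lemma cont_slice:
  assumes "continuous_on (UNIV \<times> {0..1}) (f :: pt \<times> real \<Rightarrow> pt)"
  shows "continuous_on {0..1} (\<lambda>s. f (x, s))"
proof -
  have "continuous_on {0..1::real} (\<lambda>s. (x, s))" by (intro continuous_intros)
  moreover have "(\<lambda>s. (x, s)) ` {0..1::real} \<subseteq> UNIV \<times> {0..1}" by auto
  ultimately show ?thesis using continuous_on_compose2[OF assms] by blast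
qed

lemma cont_dt:
  assumes "\<And>x. continuous_on A (\<lambda>s. f (x, s))"
  shows "continuous_on A (\<lambda>s. dt (f (p, s)) (f (q, s)) (f (r, s)))"
  unfolding dt_def by (intro continuous_intros assms)


theorem mainTheorem5:
  assumes "finite S" and "general_position S"
  shows "supporting S (exit_graph S)"
  unfolding supporting_def
proof (intro allI impI)
  fix f :: "pt \<times> real \<Rightarrow> pt"
  assume H: "ambient_isotopy f \<and>
          (\<forall>t\<in>{0..1}.
             (\<forall>a b. {a, b} \<in> exit_graph S \<longrightarrow>
                (\<exists>c d. (\<lambda>x. f (x, t)) ` closed_segment a b = closed_segment c d)) \<and>
             (\<forall>A. A \<subseteq> (\<lambda>x. f (x, t)) ` S \<and> card A = 4 \<longrightarrow> \<not> collinear A))"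
  have iso: "ambient_isotopy f" using H by (rule conjunct1)
  have H2: "\<forall>t\<in>{0..1}.
             (\<forall>a b. {a, b} \<in> exit_graph S \<longrightarrow>
                (\<exists>c d. (\<lambda>x. f (x, t)) ` closed_segment a b = closed_segment c d)) \<and>
             (\<forall>A. A \<subseteq> (\<lambda>x. f (x, t)) ` S \<and> card A = 4 \<longrightarrow> \<not> collinear A)"
    using H by (rule conjunct2)
  have cont: "continuous_on (UNIV \<times> {0..1}) f" using iso unfolding ambient_isotopy_def by (rule conjunct1)
  have id0: "\<And>x. f (x, 0) = x" using iso unfolding ambient_isotopy_def by blast
  have homeo: "\<forall>t\<in>{0..1}. \<exists>g. homeomorphism UNIV UNIV (\<lambda>x. f (x, t)) g"
    using iso unfolding ambient_isotopy_def by blast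
  have inj: "inj (\<lambda>x. f (x, s))" if "s \<in> {0..1}" for s
    using homeo that homeo_inj by blast
  have contF: "continuous_on {0..1} (\<lambda>s. f (x, s))" for x
    using cont by (rule cont_slice)
  define D where "D p q r s = dt (f (p, s)) (f (q, s)) (f (r, s))" for p q r s
  have contD: "continuous_on {0..1} (D p q r)" for p q r
    unfolding D_def using contF by (rule cont_dt)
  have D0: "D p q r 0 = dt p q r" for p q r by (simp add: D_def id0)
  have gp0: "dt p q r \<noteq> 0" if "p\<in>S" "q\<in>S" "r\<in>S" "p\<noteq>q" "p\<noteq>r" "q\<noteq>r" for p q r
    using that assms(2) dt_zero_collinear unfolding general_position_def by blast
  have oppo: "D p q r 0 * D p q r s < 0"
    if "p\<in>S" "q\<in>S" "r\<in>S" "p\<noteq>q" "p\<noteq>r" "q\<noteq>r" "D p q r s \<noteq> 0"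
       "sgn (D p q r s) \<noteq> orient p q r" for p q r s
  proof -
    have "D p q r 0 \<noteq> 0" using gp0 that D0 by simp
    moreover have "sgn (D p q r 0) = orient p q r" using D0 orient_dt by simp
    ultimately show ?thesis using that by (auto simp: sgn_if mult_less_0_iff split: if_splits)
  qed
  have nz: "\<forall>s\<in>{0..1}. \<forall>p\<in>S. \<forall>q\<in>S. \<forall>r\<in>S. p\<noteq>q \<and> p\<noteq>r \<and> q\<noteq>r \<longrightarrow> D p q r s \<noteq> 0"
  proof (rule ccontr)
    assume nc: "\<not> ?thesis"
    define T where "T = {x \<in> S \<times> S \<times> S. fst x \<noteq> fst (snd x) \<and> fst x \<noteq> snd (snd x) \<and> fst (snd x) \<noteq> snd (snd x)}"
    define Z where "Z = (\<Union>x\<in>T. {s\<in>{0..1}. D (fst x) (fst (snd x)) (snd (snd x)) s = 0})"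
    have finT: "finite T" unfolding T_def using assms(1) by auto
    have clZ: "closed Z" unfolding Z_def
      by (intro closed_UN finT ballI continuous_closed_preimage_constant contD) auto
    have Zne: "Z \<noteq> {}" using nc unfolding Z_def T_def by fastforce
    have bdd: "bdd_below Z" unfolding Z_def by (rule bdd_belowI[of _ 0]) auto
    define \<tau> where "\<tau> = Inf Z"
    have tauZ: "\<tau> \<in> Z" unfolding \<tau>_def using closed_contains_Inf Zne bdd clZ by blast
    then have tau01: "\<tau> \<in> {0..1}" unfolding Z_def by auto
    have before: "D p q r s \<noteq> 0"
      if "p\<in>S" "q\<in>S" "r\<in>S" "p\<noteq>q" "p\<noteq>r" "q\<noteq>r" "s \<in> {0..1}" "s < \<tau>" for p q r s
    proof
      assume "D p q r s = 0"
      have pT: "(p, q, r) \<in> T" unfolding T_def using that by simp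
      have sIn: "s \<in> {s\<in>{0..1}. D p q r s = 0}" using that \<open>D p q r s = 0\<close> by simp
      have sZ: "s \<in> Z" unfolding Z_def by (rule UN_I[OF pT]) (use sIn in simp)
      have "\<tau> \<le> s" unfolding \<tau>_def by (rule cInf_lower[OF sZ bdd])
      then show False using that by simp
    qed
    have sgtau: "sgn (D p q r \<tau>) = orient p q r"
      if "p\<in>S" "q\<in>S" "r\<in>S" "p\<noteq>q" "p\<noteq>r" "q\<noteq>r" "D p q r \<tau> \<noteq> 0" for p q r
    proof (rule ccontr)
      assume "sgn (D p q r \<tau>) \<noteq> orient p q r"
      then have neg: "D p q r 0 * D p q r \<tau> < 0" using oppo that by blast
      have cD: "continuous_on {0..\<tau>} (D p q r)"
        by (rule continuous_on_subset[OF contD]) (use tau01 in auto)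
      then obtain s where s: "s \<in> {0..\<tau>}" "D p q r s = 0"
        using no_sign_change[of 0 \<tau> "D p q r", OF cD _ neg] tau01 by auto
      have "s \<noteq> \<tau>" using s that by auto
      then show False using before[of p q r s] that s tau01 by auto
    qed
    obtain x where xT: "x \<in> T" and xD: "D (fst x) (fst (snd x)) (snd (snd x)) \<tau> = 0"
      using tauZ unfolding Z_def by blast
    obtain a b c where abc: "a\<in>S" "b\<in>S" "c\<in>S" "a\<noteq>b" "a\<noteq>c" "b\<noteq>c" "D a b c \<tau> = 0"
    proof -
      obtain a b c where x: "x = (a, b, c)" by (cases x) auto
      have h: "a \<in> S \<and> b \<in> S \<and> c \<in> S \<and> a \<noteq> b \<and> a \<noteq> c \<and> b \<noteq> c"
        using xT x unfolding T_def by simp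
      have "D a b c \<tau> = 0" using xD x by simp
      then show ?thesis using h that by meson
    qed
    define F where "F = (\<lambda>x. f (x, \<tau>))"
    have injF: "inj F" unfolding F_def using inj tau01 by blast
    have seg: "\<And>a b. {a, b} \<in> exit_graph S \<Longrightarrow> \<exists>c d. F ` closed_segment a b = closed_segment c d"
      using H2 tau01 unfolding F_def by blast
    have no4: "\<forall>A. A \<subseteq> F ` S \<and> card A = 4 \<longrightarrow> \<not> collinear A"
      using H2 tau01 unfolding F_def by blast
    have sg: "\<forall>p\<in>S. \<forall>q\<in>S. \<forall>r\<in>S. p\<noteq>q \<and> p\<noteq>r \<and> q\<noteq>r \<and> dt (F p) (F q) (F r) \<noteq> 0
              \<longrightarrow> sgn (dt (F p) (F q) (F r)) = orient p q r"
      using sgtau unfolding F_def D_def by blast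
    have final: False if "x\<in>S" "y\<in>S" "z\<in>S" "x\<noteq>y" "x\<noteq>z" "y\<noteq>z" "0 < w" "w < 1"
      "F y = F x + w *\<^sub>R (F z - F x)" for x y z w
    proof -
      have s1: "\<not>(\<exists>p\<in>S. strictly_separates x p z y)"
        using side[OF inj_on_subset[OF injF] that(1,2,3,4,5,6) that(9) that(7) sg no4] by simp
      have e2: "F y = F z + (1 - w) *\<^sub>R (F x - F z)" using that(9) by (simp add: algebra_simps)
      have w2: "1 - w > 0" using that(8) by simp
      have s2: "\<not>(\<exists>p\<in>S. strictly_separates z p x y)"
        using side[OF inj_on_subset[OF injF] that(3,2,1) that(6)[symmetric] that(5)[symmetric] that(4)[symmetric] e2 w2 sg no4] by simp
      have "exit_edge_with_witness S x z y"
        unfolding exit_edge_with_witness_def using s1 s2 that by blast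
      then have "{x, z} \<in> exit_graph S" unfolding exit_graph_def exit_edge_def by blast
      then have "\<exists>c d. F ` closed_segment x z = closed_segment c d" by (rule seg)
      then show False using contra[OF assms(2) that(1-6) injF that(9,7,8)] by blast
    qed
    have "dt (F a) (F b) (F c) = 0" using abc unfolding F_def D_def by simp
    moreover have "F a \<noteq> F b" "F a \<noteq> F c" "F b \<noteq> F c" using abc injF by (auto dest: injD)
    ultimately have "(\<exists>w. 0 < w \<and> w < 1 \<and> F c = F a + w *\<^sub>R (F b - F a)) \<or>
         (\<exists>w. 0 < w \<and> w < 1 \<and> F b = F a + w *\<^sub>R (F c - F a)) \<or>
         (\<exists>w. 0 < w \<and> w < 1 \<and> F a = F c + w *\<^sub>R (F b - F c))" by (rule middle)
    then show False
      using final[of a c b] final[of a b c] final[of c a b] abc by blast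
  qed
  show "\<forall>t\<in>{0..1}. general_position ((\<lambda>x. f (x, t)) ` S) \<longrightarrow> same_order_type S (\<lambda>x. f (x, t))"
    unfolding same_order_type_def
  proof (intro ballI impI)
    fix t p q r assume t: "t \<in> {0..1}" and "general_position ((\<lambda>x. f (x, t)) ` S)" and pqr: "p\<in>S" "q\<in>S" "r\<in>S" "p \<noteq> q \<and> p \<noteq> r \<and> q \<noteq> r"
    have Dt: "D p q r t \<noteq> 0" using nz pqr t by blast
    have "sgn (D p q r t) = orient p q r"
    proof (rule ccontr)
      assume "sgn (D p q r t) \<noteq> orient p q r"
      then have neg: "D p q r 0 * D p q r t < 0" using oppo pqr Dt by blast
      have cD: "continuous_on {0..t} (D p q r)"
        by (rule continuous_on_subset[OF contD]) (use t in auto)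
      then obtain s where s: "s \<in> {0..t}" "D p q r s = 0"
        using no_sign_change[of 0 t "D p q r", OF cD _ neg] t by auto
      then show False using nz pqr t by auto
    qed
    then show "orient (f (p, t)) (f (q, t)) (f (r, t)) = orient p q r"
      by (simp add: D_def orient_dt)
  qed
qed

end
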